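(* For each $n$ let $0<p_n,q_n\le 1$, let $M=\lceil n^2/p_n\rceil$, and let $\alpha$ be any initial configuration of $n$ cards. Play $M$ moves of $p_n$-random $q_n$-proportion Bulgarian solitaire $\mathscr{B}(n,p_n,q_n)$ starting from $\alpha$. Then, with probability tending to $1$ as $n\to\infty$, every pile present in $\alpha$ has been completely consumed (contains no cards) after these $M$ moves.
   Context: $\mathscr{B}(n,p,q)$ ($0<p,q\le 1$) is played on $n$ identical cards distributed in piles. In one move, from each pile of size $h$ the top $\lceil qh\rceil$ cards are candidates; each candidate card is picked with probability $p$, independently of all other candidates; the picked cards are removed and together form one new pile. Piles are tracked individually (ordered by time of creation), so that one can follow what happens to each pile of the initial configuration. *)

theory Defs
  imports "HOL-Probability.Probability"
begin

text \<open>A configuration is the list of pile sizes, ordered by time of creation.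
  Piles are never deleted from the list (a consumed pile has size 0), so the
  piles of the initial configuration are exactly the first entries.\<close>

text \<open>Numbers of picked cards, independently for each pile: from a pile of
  size h the top ceiling(q h) cards are candidates, each picked with probability p.\<close>
fun picks :: "real \<Rightarrow> real \<Rightarrow> nat list \<Rightarrow> nat list pmf" where
  "picks p q [] = return_pmf []"
| "picks p q (h # hs) =
     bind_pmf (binomial_pmf (nat \<lceil>q * real h\<rceil>) p) (\<lambda>k.
     bind_pmf (picks p q hs) (\<lambda>ks. return_pmf (k # ks)))"

definition bs_step :: "real \<Rightarrow> real \<Rightarrow> nat list \<Rightarrow> nat list pmf" where
  "bs_step p q xs = map_pmf (\<lambda>ks. map2 (-) xs ks @ [sum_list ks]) (picks p q xs)"

fun bs_run :: "real \<Rightarrow> real \<Rightarrow> nat \<Rightarrow> nat list \<Rightarrow> nat list pmf" where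
  "bs_run p q 0 xs = return_pmf xs"
| "bs_run p q (Suc m) xs = bind_pmf (bs_run p q m xs) (bs_step p q)"

end

theory Submission
  imports Defs "HOL-Real_Asymp.Real_Asymp"
begin

definition fpot :: "nat \<Rightarrow> ennreal" where "fpot h = (if h = 0 then 0 else 2^h)"

lemma pile:
  assumes p: "0 < p" "p \<le> 1" and q: "0 < q" "q \<le> 1"
  shows "(\<integral>\<^sup>+k. fpot (h - k) \<partial>binomial_pmf (nat \<lceil>q * real h\<rceil>) p) \<le> ennreal (1 - p/2) * fpot h"
proof (cases "h = 0")
  case True then show ?thesis by (simp add: fpot_def)
next
  case False
  define N where "N = nat \<lceil>q * real h\<rceil>"
  have N1: "N \<ge> 1" using False q unfolding N_def by (simp add: Suc_le_eq)
  have bd: "fpot (h - k) \<le> 2^h * (ennreal (1/2) + ennreal (1/2) * indicator {0} k)" for k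
  proof (cases "k = 0")
    case True
    have "ennreal (1/2) + ennreal (1/2) = ennreal (1/2 + 1/2)" by (rule ennreal_plus[symmetric]) auto
    then have "ennreal (1/2) + ennreal (1/2) = 1" by simp
    then show ?thesis using False True by (simp add: fpot_def)
  next
    case k: False
    have "fpot (h - k) \<le> 2^(h-1)"
    proof -
      have "(2::ennreal)^(h-k) \<le> 2^(h-1)" using k by (intro power_increasing) auto
      then show ?thesis by (simp add: fpot_def)
    qed
    also have "(2::ennreal)^(h-1) = 2^h * ennreal (1/2)"
    proof -
      have e: "(2::ennreal)^h = 2^(h-1) * 2" using False by (metis Suc_diff_1 neq0_conv power_Suc2)
      have h2: "2 * ennreal (1/2) = 1"
        using ennreal_mult[of 2 "1/2"] by simp
      have "(2::ennreal)^h * ennreal (1/2) = 2^(h-1) * 2 * ennreal (1/2)" by (simp only: e)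
      also have "\<dots> = 2^(h-1) * (2 * ennreal (1/2))" by (rule mult.assoc)
      also have "\<dots> = 2^(h-1)" by (simp only: h2 mult_1_right)
      finally show ?thesis by simp
    qed
    finally show ?thesis using k by simp
  qed
  have "(\<integral>\<^sup>+k. fpot (h - k) \<partial>binomial_pmf N p) \<le> (\<integral>\<^sup>+k. 2^h * (ennreal (1/2) + ennreal (1/2) * indicator {0} k) \<partial>binomial_pmf N p)"
    by (intro nn_integral_mono bd)
  also have "\<dots> = 2^h * (ennreal (1/2) + ennreal (1/2) * ennreal ((1-p)^N))"
    using p by (simp add: nn_integral_cmult nn_integral_add emeasure_pmf_single measure_pmf.emeasure_space_1)
  also have "\<dots> \<le> 2^h * ennreal (1 - p/2)"
  proof -
    have "(1-p)^N \<le> 1 - p" using N1 p power_decreasing[of 1 N "1-p"] by simp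
    then have "ennreal (1/2) + ennreal (1/2) * ennreal ((1-p)^N) \<le> ennreal (1 - p/2)"
    proof -
      have "ennreal (1/2) + ennreal (1/2) * ennreal ((1-p)^N) = ennreal (1/2 + 1/2 * (1-p)^N)"
      proof -
        have "ennreal (1/2) * ennreal ((1-p)^N) = ennreal (1/2 * (1-p)^N)"
          by (rule ennreal_mult[symmetric]) (use p in auto)
        moreover have "ennreal (1/2) + ennreal (1/2 * (1-p)^N) = ennreal (1/2 + 1/2 * (1-p)^N)"
          by (rule ennreal_plus[symmetric]) (use p in auto)
        ultimately show ?thesis by simp
      qed
      also have "\<dots> \<le> ennreal (1 - p/2)" using \<open>(1-p)^N \<le> 1 - p\<close> by (intro ennreal_leI) simp
      finally show ?thesis .
    qed
    then show ?thesis by (intro mult_left_mono) auto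
  qed
  finally show ?thesis using False by (simp add: N_def fpot_def mult.commute)
qed

fun Phi :: "nat \<Rightarrow> nat list \<Rightarrow> ennreal" where
  "Phi 0 ys = 0"
| "Phi (Suc L) [] = 0"
| "Phi (Suc L) (y # ys) = fpot y + Phi L ys"

lemma Phi_Nil[simp]: "Phi L [] = 0" by (cases L) auto

lemma Phi_app: "L \<le> length zs \<Longrightarrow> Phi L (zs @ ws) = Phi L zs"
proof (induction zs arbitrary: L)
  case Nil then show ?case by simp
next
  case (Cons z zs) then show ?case by (cases L) auto
qed

lemma picks_len: "ks \<in> set_pmf (picks p q xs) \<Longrightarrow> length ks = length xs"
  by (induction xs arbitrary: ks) auto

lemma picks_bound:
  assumes p: "0 < p" "p \<le> 1" and q: "0 < q" "q \<le> 1"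
  shows "(\<integral>\<^sup>+ks. Phi L (map2 (-) xs ks) \<partial>picks p q xs) \<le> ennreal (1 - p/2) * Phi L xs"
proof (induction xs arbitrary: L)
  case Nil then show ?case by simp
next
  case (Cons h hs)
  show ?case
  proof (cases L)
    case 0 then show ?thesis by simp
  next
    case (Suc L')
    let ?B = "binomial_pmf (nat \<lceil>q * real h\<rceil>) p"
    have "(\<integral>\<^sup>+ks. Phi L (map2 (-) (h#hs) ks) \<partial>picks p q (h#hs))
       = (\<integral>\<^sup>+k. (\<integral>\<^sup>+ks. fpot (h - k) + Phi L' (map2 (-) hs ks) \<partial>picks p q hs) \<partial>?B)"
      using Suc by simp
    also have "\<dots> = (\<integral>\<^sup>+k. fpot (h - k) + (\<integral>\<^sup>+ks. Phi L' (map2 (-) hs ks) \<partial>picks p q hs) \<partial>?B)"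
      by (simp add: nn_integral_add measure_pmf.emeasure_space_1)
    also have "\<dots> \<le> (\<integral>\<^sup>+k. fpot (h - k) + ennreal (1 - p/2) * Phi L' hs \<partial>?B)"
      by (intro nn_integral_mono add_left_mono Cons.IH)
    also have "\<dots> = (\<integral>\<^sup>+k. fpot (h - k) \<partial>?B) + ennreal (1 - p/2) * Phi L' hs"
      by (simp add: nn_integral_add measure_pmf.emeasure_space_1)
    also have "\<dots> \<le> ennreal (1 - p/2) * fpot h + ennreal (1 - p/2) * Phi L' hs"
      by (intro add_right_mono pile p q)
    also have "\<dots> = ennreal (1 - p/2) * Phi L (h#hs)"
      using Suc by (simp add: distrib_left)
    finally show ?thesis .
  qed
qed

lemma run_len: "ys \<in> set_pmf (bs_run p q m xs) \<Longrightarrow> length ys = length xs + m"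
  by (induction m arbitrary: ys) (auto simp: bs_step_def dest: picks_len)

lemma step_bound:
  assumes p: "0 < p" "p \<le> 1" and q: "0 < q" "q \<le> 1" and L: "L \<le> length xs"
  shows "(\<integral>\<^sup>+ys. Phi L ys \<partial>bs_step p q xs) \<le> ennreal (1 - p/2) * Phi L xs"
proof -
  have eq: "Phi L (map2 (-) xs ks @ [s]) = Phi L (map2 (-) xs ks)" if "length ks = length xs" for ks s
  proof -
    have "L \<le> length (map2 (-) xs ks)" using that L by simp
    then show ?thesis by (rule Phi_app)
  qed
  have "(\<integral>\<^sup>+ys. Phi L ys \<partial>bs_step p q xs) = (\<integral>\<^sup>+ks. Phi L (map2 (-) xs ks) \<partial>picks p q xs)"
    unfolding bs_step_def by (simp, intro nn_integral_cong_AE) (auto simp: AE_measure_pmf_iff eq picks_len)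
  also have "\<dots> \<le> ennreal (1 - p/2) * Phi L xs" by (rule picks_bound[OF p q])
  finally show ?thesis .
qed

lemma run_bound:
  assumes p: "0 < p" "p \<le> 1" and q: "0 < q" "q \<le> 1" and L: "L \<le> length xs"
  shows "(\<integral>\<^sup>+ys. Phi L ys \<partial>bs_run p q m xs) \<le> ennreal (1 - p/2) ^ m * Phi L xs"
proof (induction m)
  case 0 then show ?case by simp
next
  case (Suc m)
  have "(\<integral>\<^sup>+ys. Phi L ys \<partial>bs_run p q (Suc m) xs)
      = (\<integral>\<^sup>+ys. (\<integral>\<^sup>+zs. Phi L zs \<partial>bs_step p q ys) \<partial>bs_run p q m xs)" by simp
  also have "\<dots> \<le> (\<integral>\<^sup>+ys. ennreal (1 - p/2) * Phi L ys \<partial>bs_run p q m xs)"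
    by (intro nn_integral_mono_AE) (auto simp: AE_measure_pmf_iff intro!: step_bound p q dest!: run_len intro: order.trans[OF L])
  also have "\<dots> = ennreal (1 - p/2) * (\<integral>\<^sup>+ys. Phi L ys \<partial>bs_run p q m xs)"
    by (simp add: nn_integral_cmult)
  also have "\<dots> \<le> ennreal (1 - p/2) * (ennreal (1 - p/2) ^ m * Phi L xs)"
    by (intro mult_left_mono Suc.IH) auto
  finally show ?case by (simp add: mult.assoc)
qed

lemma Phi_ge1: "L \<le> length ys \<Longrightarrow> i < L \<Longrightarrow> ys ! i \<noteq> 0 \<Longrightarrow> 1 \<le> Phi L ys"
proof (induction ys arbitrary: L i)
  case Nil then show ?case by simp
next
  case (Cons y ys)
  then obtain L' where L': "L = Suc L'" by (cases L) auto
  show ?case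
  proof (cases i)
    case 0
    then have "y \<noteq> 0" using Cons by simp
    then have "1 \<le> fpot y" by (simp add: fpot_def one_le_power)
    then show ?thesis using L' by (simp add: order_trans[OF _ add_increasing2])
  next
    case (Suc j)
    then have "1 \<le> Phi L' ys" using Cons L' by auto
    then show ?thesis using L' by (simp add: add_increasing)
  qed
qed

lemma Phi_le: "\<forall>y\<in>set xs. y \<le> n \<Longrightarrow> Phi L xs \<le> ennreal (real (length xs) * 2^n)"
proof (induction xs arbitrary: L)
  case Nil then show ?case by simp
next
  case (Cons y ys)
  show ?case
  proof (cases L)
    case 0 then show ?thesis by simp
  next
    case (Suc L')
    have "fpot y \<le> ennreal (2^n)"
    proof -
      have "(2::ennreal)^y \<le> 2^n" using Cons.prems by (intro power_increasing) auto
      also have "(2::ennreal)^n = ennreal (2^n)" using ennreal_power[of 2 n] by simp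
      finally show ?thesis by (simp add: fpot_def)
    qed
    moreover have "Phi L' ys \<le> ennreal (real (length ys) * 2^n)" using Cons by auto
    ultimately have "Phi L (y#ys) \<le> ennreal (2^n) + ennreal (real (length ys) * 2^n)"
      using Suc by (simp add: add_mono)
    also have "\<dots> = ennreal (real (length (y#ys)) * 2^n)"
      by (subst ennreal_plus[symmetric]) (auto simp: algebra_simps)
    finally show ?thesis .
  qed
qed

lemma len_le_sum: "0 \<notin> set (xs::nat list) \<Longrightarrow> length xs \<le> sum_list xs"
proof (induction xs)
  case Nil then show ?case by simp
next
  case (Cons x xs) then show ?case by (cases x) auto
qed

lemma bad_bound:
  assumes p: "0 < p" "p \<le> 1" and q: "0 < q" "q \<le> 1"
    and a: "sum_list xs = n" "0 \<notin> set xs"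
  shows "measure_pmf.prob (bs_run p q m xs) {ys. \<not> (\<forall>i < length xs. ys ! i = 0)}
         \<le> (1 - p/2) ^ m * real n * 2^n"
proof -
  let ?E = "{ys. \<not> (\<forall>i < length xs. ys ! i = 0)}"
  let ?L = "length xs"
  have "emeasure (bs_run p q m xs) ?E = (\<integral>\<^sup>+ys. indicator ?E ys \<partial>bs_run p q m xs)" by simp
  also have "\<dots> \<le> (\<integral>\<^sup>+ys. Phi ?L ys \<partial>bs_run p q m xs)"
  proof (intro nn_integral_mono_AE, unfold AE_measure_pmf_iff, intro ballI)
    fix ys assume ys: "ys \<in> set_pmf (bs_run p q m xs)"
    then have "?L \<le> length ys" by (simp add: run_len)
    then show "indicator ?E ys \<le> Phi ?L ys"
      by (auto simp: indicator_def intro: Phi_ge1)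
  qed
  also have "\<dots> \<le> ennreal (1 - p/2) ^ m * Phi ?L xs" by (rule run_bound[OF p q]) simp
  also have "\<dots> \<le> ennreal (1 - p/2) ^ m * ennreal (real ?L * 2^n)"
  proof -
    have "\<forall>y\<in>set xs. y \<le> n" using a by (auto intro: member_le_sum_list)
    then show ?thesis by (intro mult_left_mono Phi_le) auto
  qed
  also have "\<dots> \<le> ennreal ((1 - p/2) ^ m * real n * 2^n)"
  proof -
    have "real ?L \<le> real n" using len_le_sum[OF a(2)] a(1) by simp
    then have "(1 - p/2) ^ m * (real ?L * 2^n) \<le> (1 - p/2) ^ m * real n * 2^n"
      using p by (simp add: mult.assoc mult_left_mono)
    moreover have "ennreal (1 - p/2) ^ m * ennreal (real ?L * 2^n) = ennreal ((1 - p/2) ^ m * (real ?L * 2^n))"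
      using p by (simp add: ennreal_power ennreal_mult)
    ultimately show ?thesis by (simp add: ennreal_leI)
  qed
  finally have "emeasure (bs_run p q m xs) ?E \<le> ennreal ((1 - p/2) ^ m * real n * 2^n)" .
  then show ?thesis
    using p by (simp add: measure_pmf.emeasure_eq_measure)
qed

lemma lim0: "(\<lambda>n::nat. exp (- (real n ^ 2) / 2) * real n * 2^n) \<longlonglongrightarrow> 0"
  by real_asymp

theorem lemma4:
  fixes p q :: "nat \<Rightarrow> real" and \<alpha> :: "nat \<Rightarrow> nat list"
  assumes "\<And>n. 0 < p n \<and> p n \<le> 1"
    and "\<And>n. 0 < q n \<and> q n \<le> 1"
    and "\<And>n. sum_list (\<alpha> n) = n \<and> 0 \<notin> set (\<alpha> n)"
  shows "(\<lambda>n. measure_pmf.prob (bs_run (p n) (q n) (nat \<lceil>real n ^ 2 / p n\<rceil>) (\<alpha> n))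
             {ys. \<forall>i < length (\<alpha> n). ys ! i = 0}) \<longlonglongrightarrow> 1"
proof (rule tendsto_sandwich)
  define g where "g n = exp (- (real n ^ 2) / 2) * real n * 2^n" for n :: nat
  have g: "g \<longlonglongrightarrow> 0" unfolding g_def by (rule lim0)
  then show "(\<lambda>n. 1 - g n) \<longlonglongrightarrow> 1" using tendsto_diff[OF tendsto_const g, of 1] by simp
  show "(\<lambda>n. 1) \<longlonglongrightarrow> (1::real)" by simp
  show "\<forall>\<^sub>F n in sequentially. measure_pmf.prob (bs_run (p n) (q n) (nat \<lceil>real n ^ 2 / p n\<rceil>) (\<alpha> n))
             {ys. \<forall>i < length (\<alpha> n). ys ! i = 0} \<le> 1"
    by (simp add: measure_pmf.prob_le_1)
  show "\<forall>\<^sub>F n in sequentially. 1 - g n \<le> measure_pmf.prob (bs_run (p n) (q n) (nat \<lceil>real n ^ 2 / p n\<rceil>) (\<alpha> n))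
             {ys. \<forall>i < length (\<alpha> n). ys ! i = 0}"
  proof (rule always_eventually, rule allI)
    fix n
    define M where "M = nat \<lceil>real n ^ 2 / p n\<rceil>"
    define P where "P = bs_run (p n) (q n) M (\<alpha> n)"
    define E :: "nat list set" where "E = {ys. \<not> (\<forall>i < length (\<alpha> n). ys ! i = 0)}"
    have p: "0 < p n" "p n \<le> 1" and q: "0 < q n" "q n \<le> 1" and a: "sum_list (\<alpha> n) = n" "0 \<notin> set (\<alpha> n)"
      using assms by auto
    have bad: "measure_pmf.prob P E \<le> (1 - p n/2) ^ M * real n * 2^n"
      unfolding P_def E_def by (rule bad_bound[OF p q a])
    have "(1 - p n/2) ^ M \<le> exp (- p n/2) ^ M"
      using p by (intro power_mono) (use exp_ge_add_one_self[of "- p n/2"] in auto)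
    also have "\<dots> = exp (real M * (- p n/2))" by (rule exp_of_nat_mult[symmetric])
    also have "\<dots> \<le> exp (- (real n ^ 2) / 2)"
    proof -
      have "real n ^ 2 / p n \<le> real M" unfolding M_def by (rule real_nat_ceiling_ge)
      then have "real n ^ 2 \<le> real M * p n" using p by (simp add: divide_le_eq)
      then show ?thesis by simp
    qed
    finally have "(1 - p n/2) ^ M * real n * 2^n \<le> g n"
      unfolding g_def by (intro mult_right_mono) auto
    with bad have "measure_pmf.prob P E \<le> g n" by linarith
    moreover have "measure_pmf.prob P (UNIV - E) = 1 - measure_pmf.prob P E"
      using measure_pmf.prob_compl[of E P] by simp
    moreover have "{ys. \<forall>i < length (\<alpha> n). ys ! i = 0} = UNIV - E" unfolding E_def by auto
    ultimately show "1 - g n \<le> measure_pmf.prob (bs_run (p n) (q n) (nat \<lceil>real n ^ 2 / p n\<rceil>) (\<alpha> n))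
             {ys. \<forall>i < length (\<alpha> n). ys ! i = 0}"
      unfolding P_def M_def by simp
  qed
qed

end
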